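(* Let $(X,\tau)$ be a locally strongly compact topological space and $A$ a pre-closed subset of $X$. Then $A$ with the relative topology is locally strongly compact, in the sense that for every $x\in A$ there is $G\subseteq A$ and a pre-open set $V$ of $X$ with $x\in V\cap A\subseteq G$ and such that every cover of $G$ by sets of the form $W\cap G$, $W$ pre-open in $X$, has a finite subcover.
   Context: A subset $B$ of a topological space is pre-open if $B\subseteq Int(Cl(B))$, pre-closed if its complement is pre-open. A subset $B\subseteq X$ is strongly compact (as a subspace) if every cover of $B$ by sets $W\cap B$, $W$ pre-open in $X$, has a finite subcover. $X$ is locally strongly compact if for every $x\in X$ there is $B\subseteq X$ and a pre-open $V$ with $x\in V\subseteq B$ and $B$ strongly compact. *)

theory Defs
  imports "HOL-Analysis.Analysis"
begin

definition preopen :: "'a topology \<Rightarrow> 'a set \<Rightarrow> bool" where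
  "preopen X B \<longleftrightarrow> B \<subseteq> topspace X \<and> B \<subseteq> X interior_of (X closure_of B)"

definition preclosed :: "'a topology \<Rightarrow> 'a set \<Rightarrow> bool" where
  "preclosed X A \<longleftrightarrow> A \<subseteq> topspace X \<and> preopen X (topspace X - A)"

definition strongly_compact :: "'a topology \<Rightarrow> 'a set \<Rightarrow> bool" where
  "strongly_compact X B \<longleftrightarrow> B \<subseteq> topspace X \<and>
     (\<forall>\<U>. (\<forall>U\<in>\<U>. \<exists>W. preopen X W \<and> U = W \<inter> B) \<and> B \<subseteq> \<Union>\<U> \<longrightarrow>
        (\<exists>\<F>. finite \<F> \<and> \<F> \<subseteq> \<U> \<and> B \<subseteq> \<Union>\<F>))"

definition locally_strongly_compact :: "'a topology \<Rightarrow> bool" where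
  "locally_strongly_compact X \<longleftrightarrow>
     (\<forall>x\<in>topspace X. \<exists>B V. B \<subseteq> topspace X \<and> preopen X V \<and> x \<in> V \<and> V \<subseteq> B \<and> strongly_compact X B)"

end

theory Submission
  imports Defs
begin

theorem corollary4p1:
  fixes X :: "'a topology" and A :: "'a set"
  assumes "locally_strongly_compact X"
    and "preclosed X A"
  shows "\<forall>x\<in>A. \<exists>G V. G \<subseteq> A \<and> preopen X V \<and> x \<in> V \<inter> A \<and> V \<inter> A \<subseteq> G \<and>
            strongly_compact X G"
proof
  fix x assume xA: "x \<in> A"
  have AX: "A \<subseteq> topspace X" and pc: "preopen X (topspace X - A)"
    using assms(2) unfolding preclosed_def by auto
  obtain B V where BX: "B \<subseteq> topspace X" and pV: "preopen X V" and xV: "x \<in> V"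
    and VB: "V \<subseteq> B" and scB: "strongly_compact X B"
    using assms(1) xA AX unfolding locally_strongly_compact_def by blast
  define G where "G = B \<inter> A"
  have "strongly_compact X G"
    unfolding strongly_compact_def
  proof (intro conjI allI impI)
    show "G \<subseteq> topspace X" using BX G_def by auto
    fix \<U> assume H: "(\<forall>U\<in>\<U>. \<exists>W. preopen X W \<and> U = W \<inter> G) \<and> G \<subseteq> \<Union>\<U>"
    define w where "w U = (SOME W. preopen X W \<and> U = W \<inter> G)" for U
    have w: "preopen X (w U) \<and> U = w U \<inter> G" if "U \<in> \<U>" for U
    proof -
      have "\<exists>W. preopen X W \<and> U = W \<inter> G" using H that by blast
      then show ?thesis unfolding w_def by (rule someI_ex)
    qed
    define g where "g U = w U \<inter> B" for U
    define E where "E = (topspace X - A) \<inter> B"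
    define \<V> where "\<V> = g ` \<U> \<union> {E}"
    have "\<forall>U\<in>\<V>. \<exists>W. preopen X W \<and> U = W \<inter> B"
    proof
      fix U assume "U \<in> \<V>"
      then consider (a) U' where "U' \<in> \<U>" "U = g U'" | (b) "U = E" unfolding \<V>_def by blast
      then show "\<exists>W. preopen X W \<and> U = W \<inter> B"
      proof cases
        case a then show ?thesis using w[OF a(1)] unfolding g_def by blast
      next
        case b then show ?thesis using pc unfolding E_def by blast
      qed
    qed
    moreover have "B \<subseteq> \<Union>\<V>"
    proof
      fix y assume yB: "y \<in> B"
      show "y \<in> \<Union>\<V>"
      proof (cases "y \<in> A")
        case True
        then have "y \<in> G" using yB G_def by auto
        then obtain U where "U \<in> \<U>" "y \<in> U" using H by blast
        then have "y \<in> g U" using w[OF \<open>U \<in> \<U>\<close>] yB unfolding g_def by blast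
        then show ?thesis using \<open>U \<in> \<U>\<close> \<V>_def by auto
      next
        case False
        then have "y \<in> E" using yB BX E_def by auto
        then show ?thesis using \<V>_def by auto
      qed
    qed
    ultimately obtain \<F> where F: "finite \<F>" "\<F> \<subseteq> \<V>" "B \<subseteq> \<Union>\<F>"
      using scB unfolding strongly_compact_def by meson
    have "\<F> - {E} \<subseteq> g ` \<U>" using F(2) \<V>_def by auto
    moreover have "finite (\<F> - {E})" using F(1) by auto
    ultimately obtain \<U>' where U': "\<U>' \<subseteq> \<U>" "finite \<U>'" "\<F> - {E} = g ` \<U>'"
      by (meson finite_subset_image)
    have "G \<subseteq> \<Union>\<U>'"
    proof
      fix y assume yG: "y \<in> G"
      then obtain Fs where "Fs \<in> \<F>" "y \<in> Fs" using F(3) G_def by auto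
      moreover have "y \<notin> E" using yG G_def E_def by auto
      ultimately have "Fs \<in> g ` \<U>'" using U'(3) by auto
      then obtain U where "U \<in> \<U>'" "Fs = g U" by auto
      then have "U \<in> \<U>" using U'(1) by blast
      then have "y \<in> U" using w[OF \<open>U \<in> \<U>\<close>] \<open>Fs = g U\<close> \<open>y \<in> Fs\<close> yG unfolding g_def by blast
      then show "y \<in> \<Union>\<U>'" using \<open>U \<in> \<U>'\<close> by auto
    qed
    then show "\<exists>\<F>. finite \<F> \<and> \<F> \<subseteq> \<U> \<and> G \<subseteq> \<Union>\<F>" using U' by blast
  qed
  then show "\<exists>G V. G \<subseteq> A \<and> preopen X V \<and> x \<in> V \<inter> A \<and> V \<inter> A \<subseteq> G \<and>
            strongly_compact X G"
    using pV xV xA VB G_def by blast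
qed

end
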